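(* Let $u_0\in C(\mathbb{R})$ satisfy $u_0(x)>0$ for all $x\in\mathbb{R}$, $\liminf_{x\to-\infty}u_0(x)>0$, $u_0(x)\to0$ as $x\to+\infty$, and suppose there is a constant $\xi_0$ such that $u_0\in C^2([\xi_0,+\infty))$, $u_0'\le0$ on $[\xi_0,+\infty)$, and $u_0''(x)/u_0(x)\to0$ as $x\to+\infty$. Then: (i) $u_0'(x)/u_0(x)\to0$ as $x\to+\infty$; (ii) for every $\kappa>0$ there exists $x_\kappa$ such that $u_0(x)\ge e^{-\kappa x}$ for all $x\in[x_\kappa,+\infty)$; (iii) for any $\gamma_1>0$, $\gamma_2>0$ and $\rho_1>\rho_2>0$, if functions $y_1(t)$, $y_2(t)$ satisfy $u_0(y_1(t))=\gamma_1e^{-\rho_1t}$ and $u_0(y_2(t))=\gamma_2e^{-\rho_2t}$ for all $t>0$ large enough, then $\lim_{t\to+\infty}(y_1(t)-y_2(t))=+\infty$. *)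

theory Defs
  imports "HOL-Analysis.Analysis"
begin

end

theory Submission
  imports Defs
begin

theorem lemma2p3:
  fixes u0 u1 u2 :: "real \<Rightarrow> real" and \<xi>0 :: real
  assumes cont: "continuous_on UNIV u0"
    and pos: "\<forall>x. u0 x > 0"
    and liminf: "Liminf at_bot (\<lambda>x. ereal (u0 x)) > 0"
    and lim0: "(u0 \<longlongrightarrow> 0) at_top"
    and d1: "\<forall>x\<ge>\<xi>0. (u0 has_real_derivative u1 x) (at x within {\<xi>0..})"
    and d2: "\<forall>x\<ge>\<xi>0. (u1 has_real_derivative u2 x) (at x within {\<xi>0..})"
    and c2: "continuous_on {\<xi>0..} u2"
    and mono: "\<forall>x\<ge>\<xi>0. u1 x \<le> 0"
    and ratio2: "((\<lambda>x. u2 x / u0 x) \<longlongrightarrow> 0) at_top"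
  shows "((\<lambda>x. u1 x / u0 x) \<longlongrightarrow> 0) at_top
    \<and> (\<forall>\<kappa>>0. \<exists>x\<kappa>. \<forall>x\<ge>x\<kappa>. u0 x \<ge> exp (- \<kappa> * x))
    \<and> (\<forall>\<gamma>1 \<gamma>2 \<rho>1 \<rho>2 (y1::real \<Rightarrow> real) (y2::real \<Rightarrow> real).
          \<gamma>1 > 0 \<longrightarrow> \<gamma>2 > 0 \<longrightarrow> \<rho>2 > 0 \<longrightarrow> \<rho>1 > \<rho>2 \<longrightarrow>
          (\<forall>\<^sub>F t in at_top. u0 (y1 t) = \<gamma>1 * exp (- \<rho>1 * t)
                              \<and> u0 (y2 t) = \<gamma>2 * exp (- \<rho>2 * t)) \<longrightarrow>
          filterlim (\<lambda>t. y1 t - y2 t) at_top at_top)"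
proof -
  have D1: "(u0 has_real_derivative u1 x) (at x)" if "x > \<xi>0" for x
  proof -
    have "at x within {\<xi>0..} = at x"
      by (rule at_within_interior) (use that in simp)
    with d1 that show ?thesis by (metis less_imp_le)
  qed
  have D2: "(u1 has_real_derivative u2 x) (at x)" if "x > \<xi>0" for x
  proof -
    have "at x within {\<xi>0..} = at x"
      by (rule at_within_interior) (use that in simp)
    with d2 that show ?thesis by (metis less_imp_le)
  qed
  have dec: "u0 b \<le> u0 a" if "\<xi>0 < a" "a \<le> b" for a b
  proof (rule DERIV_nonpos_imp_nonincreasing[OF that(2)])
    fix x assume "a \<le> x" "x \<le> b"
    hence "x > \<xi>0" using that by simp
    thus "\<exists>y. (u0 has_real_derivative y) (at x) \<and> y \<le> 0" using D1 mono by force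
  qed
  have P1: "eventually (\<lambda>x. -\<epsilon> < u1 x / u0 x) at_top" if \<epsilon>: "\<epsilon> > 0" for \<epsilon>
  proof -
    define e where "e = \<epsilon>^2/4"
    define h where "h = 2/\<epsilon>"
    have e: "e > 0" using \<epsilon> by (simp add: e_def)
    have h: "h > 0" using \<epsilon> by (simp add: h_def)
    have "eventually (\<lambda>x. dist (u2 x / u0 x) 0 < e) at_top"
      using ratio2 e by (simp add: tendsto_iff)
    then obtain S where S: "\<And>x. x \<ge> S \<Longrightarrow> \<bar>u2 x / u0 x\<bar> < e"
      by (auto simp: eventually_at_top_linorder)
    show ?thesis
      using eventually_ge_at_top[of "max S (\<xi>0+1)"]
    proof eventually_elim
      case (elim x)
      have x: "x \<ge> S" "x > \<xi>0" using elim by auto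
      define g' where "g' s = u1 s - u1 x - e * u0 x * (s - x)" for s
      define g where "g s = u0 s - u0 x - (s - x) * u1 x - e * u0 x * (s - x)^2 / 2" for s
      have g'le: "g' s \<le> 0" if "s \<ge> x" for s
      proof -
        have "g' s \<le> g' x"
        proof (rule DERIV_nonpos_imp_nonincreasing[OF that])
          fix t assume t: "x \<le> t" "t \<le> s"
          have "(g' has_real_derivative (u2 t - e * u0 x)) (at t)"
            unfolding g'_def using x t
            by (auto intro!: derivative_eq_intros D2)
          moreover have "u2 t - e * u0 x \<le> 0"
          proof -
            have "\<bar>u2 t / u0 t\<bar> < e" using S x t by auto
            hence "\<bar>u2 t\<bar> < e * u0 t" using pos[rule_format, of t] by (simp add: abs_div pos_divide_less_eq)
            moreover have "u0 t \<le> u0 x" using dec x t by auto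
            ultimately show ?thesis using e by (smt (verit) mult_left_mono)
          qed
          ultimately show "\<exists>y. (g' has_real_derivative y) (at t) \<and> y \<le> 0" by blast
        qed
        thus ?thesis by (simp add: g'_def)
      qed
      have "g (x + h) \<le> g x"
      proof (rule DERIV_nonpos_imp_nonincreasing[of x "x + h" g])
        show "x \<le> x + h" using h by simp
      next
        fix t assume t: "x \<le> t" "t \<le> x + h"
        have "(g has_real_derivative (g' t)) (at t)"
          unfolding g_def g'_def using x t
          by (auto intro!: derivative_eq_intros D1)
        thus "\<exists>y. (g has_real_derivative y) (at t) \<and> y \<le> 0" using g'le t by blast
      qed
      hence "u0 (x + h) - u0 x - h * u1 x - e * u0 x * h^2 / 2 \<le> 0"
        by (simp add: g_def)
      moreover have "e * h^2 / 2 = 1/2" using \<epsilon> by (simp add: e_def h_def power2_eq_square)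
      moreover have "e * u0 x * h^2 / 2 = u0 x / 2" using \<epsilon> by (simp add: e_def h_def power2_eq_square field_simps)
      ultimately have "h * u1 x \<ge> u0 (x+h) - u0 x * (3/2)"
        by linarith
      hence "h * u1 x > - u0 x * (3/2)" using pos[rule_format, of "x+h"] by linarith
      hence hu: "h * u1 x > - u0 x * (3/2)" .
      have eq1: "u1 x = (\<epsilon>/2) * (h * u1 x)" using \<epsilon> by (simp add: h_def)
      have "(\<epsilon>/2) * (h * u1 x) > (\<epsilon>/2) * (- u0 x * (3/2))"
        by (rule mult_strict_left_mono[OF hu]) (use \<epsilon> in simp)
      moreover have "(\<epsilon>/2) * (- u0 x * (3/2)) = -(3/4) * (\<epsilon> * u0 x)" by simp
      moreover have "\<epsilon> * u0 x > 0" using \<epsilon> pos by simp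
      ultimately have "u1 x > - \<epsilon> * u0 x" using eq1 by linarith
      thus ?case using pos[rule_format, of x] by (simp add: less_divide_eq)
    qed
  qed
  have part1: "((\<lambda>x. u1 x / u0 x) \<longlongrightarrow> 0) at_top"
    unfolding tendsto_iff
  proof (intro allI impI)
    fix \<epsilon> :: real assume \<epsilon>: "\<epsilon> > 0"
    show "eventually (\<lambda>x. dist (u1 x / u0 x) 0 < \<epsilon>) at_top"
      using P1[OF \<epsilon>] eventually_ge_at_top[of \<xi>0]
    proof eventually_elim
      case (elim x)
      have "u1 x / u0 x \<le> 0" using mono elim pos[rule_format, of x] by (simp add: divide_nonpos_pos)
      thus ?case using elim by simp
    qed
  qed
  have A: "\<exists>X>\<xi>0. \<forall>a b. X \<le> a \<longrightarrow> a \<le> b \<longrightarrow> ln (u0 a) + \<kappa> * a \<le> ln (u0 b) + \<kappa> * b"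
    if \<kappa>: "\<kappa> > 0" for \<kappa>
  proof -
    obtain S where S: "\<And>x. x \<ge> S \<Longrightarrow> -\<kappa> < u1 x / u0 x"
      using P1[OF \<kappa>] by (auto simp: eventually_at_top_linorder)
    show ?thesis
    proof (intro exI[of _ "max S (\<xi>0+1)"] conjI allI impI)
      show "max S (\<xi>0+1) > \<xi>0" by simp
      fix a b assume ab: "max S (\<xi>0+1) \<le> a" "a \<le> b"
      show "ln (u0 a) + \<kappa> * a \<le> ln (u0 b) + \<kappa> * b"
      proof (rule DERIV_nonneg_imp_nondecreasing[OF ab(2)])
        fix t assume t: "a \<le> t" "t \<le> b"
        have "((\<lambda>x. ln (u0 x) + \<kappa> * x) has_real_derivative (u1 t / u0 t + \<kappa>)) (at t)"
          using ab t pos[rule_format, of t]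
          by (auto intro!: derivative_eq_intros D1 simp: field_simps)
        moreover have "u1 t / u0 t + \<kappa> \<ge> 0" using S[of t] ab t by auto
        ultimately show "\<exists>y. ((\<lambda>x. ln (u0 x) + \<kappa> * x) has_real_derivative y) (at t) \<and> y \<ge> 0"
          by blast
      qed
    qed
  qed
  have part2: "\<forall>\<kappa>>0. \<exists>x\<kappa>. \<forall>x\<ge>x\<kappa>. u0 x \<ge> exp (- \<kappa> * x)"
  proof (intro allI impI)
    fix \<kappa> :: real assume \<kappa>: "\<kappa> > 0"
    obtain X where X: "\<And>a b. X \<le> a \<Longrightarrow> a \<le> b \<Longrightarrow> ln (u0 a) + \<kappa>/2 * a \<le> ln (u0 b) + \<kappa>/2 * b"
      using A[of "\<kappa>/2"] \<kappa> by auto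
    define C where "C = ln (u0 X) + \<kappa>/2 * X"
    show "\<exists>x\<kappa>. \<forall>x\<ge>x\<kappa>. u0 x \<ge> exp (- \<kappa> * x)"
    proof (intro exI[of _ "max X (-2*C/\<kappa>)"] allI impI)
      fix x assume x: "max X (-2*C/\<kappa>) \<le> x"
      have "C \<le> ln (u0 x) + \<kappa>/2 * x" using X[of X x] x by (simp add: C_def)
      moreover have "-2*C/\<kappa> \<le> x" using x by simp
      hence "-2*C \<le> \<kappa> * x" using \<kappa> by (simp add: field_simps)
      ultimately have "- \<kappa> * x \<le> ln (u0 x)" by linarith
      hence "exp (- \<kappa> * x) \<le> exp (ln (u0 x))" by simp
      thus "u0 x \<ge> exp (- \<kappa> * x)" using pos by simp
    qed
  qed
  have lowb: "\<exists>c>0. \<forall>x\<le>K. c \<le> u0 x" for K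
  proof -
    obtain z where z: "0 < ereal z" "ereal z < Liminf at_bot (\<lambda>x. ereal (u0 x))"
      using ereal_dense2[OF liminf] by auto
    have "eventually (\<lambda>x. ereal z < ereal (u0 x)) at_bot" by (rule less_LiminfD[OF z(2)])
    then obtain M where M: "\<And>x. x \<le> M \<Longrightarrow> z < u0 x" by (auto simp: eventually_at_bot_linorder)
    obtain m where m: "m \<in> {M..max M K}" "\<And>y. y \<in> {M..max M K} \<Longrightarrow> u0 m \<le> u0 y"
    proof -
      have "continuous_on {M..max M K} u0" by (rule continuous_on_subset[OF cont]) simp
      then have "\<exists>x\<in>{M..max M K}. \<forall>y\<in>{M..max M K}. u0 x \<le> u0 y"
        by (intro continuous_attains_inf) auto
      then show ?thesis using that by blast
    qed
    show ?thesis
    proof (intro exI[of _ "min z (u0 m)"] conjI allI impI)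
      show "min z (u0 m) > 0" using z pos by auto
      fix x assume "x \<le> K"
      show "min z (u0 m) \<le> u0 x"
      proof (cases "x \<le> M")
        case True thus ?thesis using M[of x] by simp
      next
        case False thus ?thesis using m(2)[of x] \<open>x \<le> K\<close> by simp
      qed
    qed
  qed
  have yinf: "eventually (\<lambda>t. y t \<ge> K) at_top"
    if g: "\<gamma> > 0" "\<rho> > 0" and ev: "eventually (\<lambda>t. u0 (y t) = \<gamma> * exp (- \<rho> * t)) at_top" for y \<gamma> \<rho> K
  proof -
    obtain c where c: "c > 0" "\<And>x. x \<le> K \<Longrightarrow> c \<le> u0 x" using lowb by blast
    show ?thesis
      using ev eventually_gt_at_top[of "(ln \<gamma> - ln c)/\<rho>"]
    proof eventually_elim
      case (elim t)
      have "ln \<gamma> - ln c < \<rho> * t" using elim(2) g by (simp add: divide_less_eq mult.commute)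
      hence "ln \<gamma> + (- \<rho> * t) < ln c" by simp
      hence "exp (ln \<gamma> + (- \<rho> * t)) < exp (ln c)" by simp
      moreover have "exp (ln \<gamma> + (- \<rho> * t)) = \<gamma> * exp (- \<rho> * t)"
        by (simp only: exp_add) (use g in simp)
      ultimately have "\<gamma> * exp (- \<rho> * t) < c" using c by simp
      show ?case
      proof (rule ccontr)
        assume "\<not> K \<le> y t"
        hence "c \<le> u0 (y t)" using c(2)[of "y t"] by simp
        thus False using elim(1) \<open>\<gamma> * exp (- \<rho> * t) < c\<close> by simp
      qed
    qed
  qed
  have part3: "\<forall>\<gamma>1 \<gamma>2 \<rho>1 \<rho>2 (y1::real \<Rightarrow> real) (y2::real \<Rightarrow> real).
          \<gamma>1 > 0 \<longrightarrow> \<gamma>2 > 0 \<longrightarrow> \<rho>2 > 0 \<longrightarrow> \<rho>1 > \<rho>2 \<longrightarrow>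
          (\<forall>\<^sub>F t in at_top. u0 (y1 t) = \<gamma>1 * exp (- \<rho>1 * t)
                              \<and> u0 (y2 t) = \<gamma>2 * exp (- \<rho>2 * t)) \<longrightarrow>
          filterlim (\<lambda>t. y1 t - y2 t) at_top at_top"
  proof (intro allI impI)
    fix \<gamma>1 \<gamma>2 \<rho>1 \<rho>2 :: real and y1 y2 :: "real \<Rightarrow> real"
    assume g1: "\<gamma>1 > 0" and g2: "\<gamma>2 > 0" and r2: "\<rho>2 > 0" and r12: "\<rho>1 > \<rho>2"
      and ev: "\<forall>\<^sub>F t in at_top. u0 (y1 t) = \<gamma>1 * exp (- \<rho>1 * t) \<and> u0 (y2 t) = \<gamma>2 * exp (- \<rho>2 * t)"
    obtain X where X: "X > \<xi>0" "\<And>a b. X \<le> a \<Longrightarrow> a \<le> b \<Longrightarrow> ln (u0 a) + 1 * a \<le> ln (u0 b) + 1 * b"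
      using A[of 1] by auto
    have e1: "eventually (\<lambda>t. y1 t \<ge> X) at_top"
      by (rule yinf[of \<gamma>1 \<rho>1 y1 X]) (use g1 r2 r12 in simp, use r2 r12 in simp, rule eventually_mono[OF ev], simp)
    have e2: "eventually (\<lambda>t. y2 t \<ge> X) at_top"
      by (rule yinf[of \<gamma>2 \<rho>2 y2 X]) (use g2 in simp, use r2 in simp, rule eventually_mono[OF ev], simp)
    define L where "L t = ln \<gamma>2 - ln \<gamma>1 + (\<rho>1 - \<rho>2) * t" for t
    show "filterlim (\<lambda>t. y1 t - y2 t) at_top at_top"
      unfolding filterlim_at_top
    proof
      fix Z :: real
      show "eventually (\<lambda>t. Z \<le> y1 t - y2 t) at_top"
        using ev e1 e2 eventually_ge_at_top[of "(max Z 1 - ln \<gamma>2 + ln \<gamma>1)/(\<rho>1 - \<rho>2)"]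
      proof eventually_elim
        case (elim t)
        have "max Z 1 - ln \<gamma>2 + ln \<gamma>1 \<le> (\<rho>1 - \<rho>2) * t"
          using elim(4) r12 by (simp add: divide_le_eq mult.commute)
        hence Lt: "L t \<ge> max Z 1" unfolding L_def by linarith
        have rr: "(\<rho>1 - \<rho>2) * t = \<rho>1 * t - \<rho>2 * t" by (simp add: algebra_simps)
        have l1: "ln (u0 (y1 t)) = ln \<gamma>1 - \<rho>1 * t" using elim(1) g1 by (simp add: ln_mult)
        have l2: "ln (u0 (y2 t)) = ln \<gamma>2 - \<rho>2 * t" using elim(1) g2 by (simp add: ln_mult)
        have "y2 t \<le> y1 t"
        proof (rule ccontr)
          assume "\<not> y2 t \<le> y1 t"
          hence "u0 (y2 t) \<le> u0 (y1 t)" using dec[of "y1 t" "y2 t"] elim X by auto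
          hence "ln (u0 (y2 t)) \<le> ln (u0 (y1 t))" using pos by simp
          thus False using l1 l2 Lt rr unfolding L_def by linarith
        qed
        hence "ln (u0 (y2 t)) + y2 t \<le> ln (u0 (y1 t)) + y1 t" using X(2)[of "y2 t" "y1 t"] elim by simp
        thus ?case using l1 l2 Lt rr unfolding L_def by linarith
      qed
    qed
  qed
  show ?thesis using part1 part2 part3 by blast
qed

end
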